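(* For a metric space $(X,d)$ the following are equivalent: (1) $(X,d)$ is locally compact. (2) $\mathsf{K}(X)$ is a continuous semilattice, and $\xi^\sigma:(X,d)\to\Sigma\,\mathsf{K}((X,d))$, $x\mapsto\{x\}$, is continuous. (3) $\mathsf{K}((X,d))$ is a continuous semilattice, and $(X,d)$ has property Q. (4) $\mathsf{K}((X,d))$ is a continuous semilattice. (5) $(X,d)$ is core compact.
   Context: For a metric space, $\mathsf{K}(X)$ is the set of nonempty compact subsets ordered by reverse inclusion (suprema, when they exist, are intersections). Scott topology on a poset: upper sets $U$ such that every directed $D$ with existing supremum in $U$ meets $U$; $\Sigma Q$ is $Q$ with it. $a\ll b$ means for every directed $D$ with existing $\bigvee D\ge b$ some $d\in D$ has $d\ge a$; $\mathsf{K}(X)$ is a continuous semilattice if it is directed complete and each $K$ is the directed supremum of $\{L:L\ll K\}$. Property Q: for all $K_1,K_2\in\mathsf{K}(X)$, $K_1\ll K_2$ iff $K_2\subseteq\operatorname{int}K_1$. Core compact: the lattice of open sets is a continuous lattice. *)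

theory Defs
  imports "HOL-Analysis.Analysis"
begin

definition directed_in :: "'b set \<Rightarrow> ('b \<Rightarrow> 'b \<Rightarrow> bool) \<Rightarrow> 'b set \<Rightarrow> bool" where
  "directed_in P le D \<longleftrightarrow> D \<subseteq> P \<and> D \<noteq> {} \<and>
     (\<forall>a\<in>D. \<forall>b\<in>D. \<exists>c\<in>D. le a c \<and> le b c)"

definition is_sup_in :: "'b set \<Rightarrow> ('b \<Rightarrow> 'b \<Rightarrow> bool) \<Rightarrow> 'b set \<Rightarrow> 'b \<Rightarrow> bool" where
  "is_sup_in P le D s \<longleftrightarrow> s \<in> P \<and> (\<forall>d\<in>D. le d s) \<and>
     (\<forall>u\<in>P. (\<forall>d\<in>D. le d u) \<longrightarrow> le s u)"

definition directed_complete :: "'b set \<Rightarrow> ('b \<Rightarrow> 'b \<Rightarrow> bool) \<Rightarrow> bool" where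
  "directed_complete P le \<longleftrightarrow> (\<forall>D. directed_in P le D \<longrightarrow> (\<exists>s. is_sup_in P le D s))"

definition way_below :: "'b set \<Rightarrow> ('b \<Rightarrow> 'b \<Rightarrow> bool) \<Rightarrow> 'b \<Rightarrow> 'b \<Rightarrow> bool" where
  "way_below P le a b \<longleftrightarrow>
     (\<forall>D s. directed_in P le D \<and> is_sup_in P le D s \<and> le b s \<longrightarrow> (\<exists>d\<in>D. le a d))"

definition continuous_poset :: "'b set \<Rightarrow> ('b \<Rightarrow> 'b \<Rightarrow> bool) \<Rightarrow> bool" where
  "continuous_poset P le \<longleftrightarrow> directed_complete P le \<and>
     (\<forall>x\<in>P. directed_in P le {y\<in>P. way_below P le y x} \<and>
             is_sup_in P le {y\<in>P. way_below P le y x} x)"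

definition continuous_lattice :: "'b set \<Rightarrow> ('b \<Rightarrow> 'b \<Rightarrow> bool) \<Rightarrow> bool" where
  "continuous_lattice P le \<longleftrightarrow> (\<forall>A. A \<subseteq> P \<longrightarrow> (\<exists>s. is_sup_in P le A s)) \<and>
     continuous_poset P le"

definition scott_open :: "'b set \<Rightarrow> ('b \<Rightarrow> 'b \<Rightarrow> bool) \<Rightarrow> 'b set \<Rightarrow> bool" where
  "scott_open P le U \<longleftrightarrow> U \<subseteq> P \<and>
     (\<forall>u\<in>U. \<forall>v\<in>P. le u v \<longrightarrow> v \<in> U) \<and>
     (\<forall>D s. directed_in P le D \<and> is_sup_in P le D s \<and> s \<in> U \<longrightarrow> D \<inter> U \<noteq> {})"

definition Kspace :: "'a::metric_space set set" where
  "Kspace = {K. compact K \<and> K \<noteq> {}}"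

definition Kle :: "'a::metric_space set \<Rightarrow> 'a set \<Rightarrow> bool" where
  "Kle K L \<longleftrightarrow> L \<subseteq> K"

definition K_continuous_semilattice :: "'a::metric_space itself \<Rightarrow> bool" where
  "K_continuous_semilattice _ \<longleftrightarrow> continuous_poset (Kspace :: 'a set set) Kle"

definition xi_sigma_continuous :: "'a::metric_space itself \<Rightarrow> bool" where
  "xi_sigma_continuous _ \<longleftrightarrow>
     (\<forall>U. scott_open (Kspace :: 'a set set) Kle U \<longrightarrow> open {x::'a. {x} \<in> U})"

definition property_Q :: "'a::metric_space itself \<Rightarrow> bool" where
  "property_Q _ \<longleftrightarrow> (\<forall>K1\<in>(Kspace :: 'a set set). \<forall>K2\<in>Kspace.
     way_below Kspace Kle K1 K2 \<longleftrightarrow> K2 \<subseteq> interior K1)"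

definition core_compact :: "'a::topological_space itself \<Rightarrow> bool" where
  "core_compact _ \<longleftrightarrow> continuous_lattice {U::'a set. open U} (\<subseteq>)"

end

theory Submission
  imports Defs
begin

lemma wbE:
  assumes "way_below P le a b" "directed_in P le D" "is_sup_in P le D s" "le b s"
  shows "\<exists>d\<in>D. le a d"
  using assms unfolding way_below_def by blast

lemma dirE:
  assumes "directed_in P le D" "x \<in> D" "y \<in> D"
  shows "\<exists>c\<in>D. le x c \<and> le y c"
  using assms unfolding directed_in_def by blast

lemma directed_fin_ub:
  assumes dir: "directed_in P le D" and fin: "finite F" and sub: "F \<subseteq> D"
    and tr: "\<And>a b c. le a b \<Longrightarrow> le b c \<Longrightarrow> le a c"
  shows "\<exists>d\<in>D. \<forall>f\<in>F. le f d"
  using fin sub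
proof (induction F rule: finite_induct)
  case empty then show ?case using dir by (auto simp: directed_in_def)
next
  case (insert x F)
  then obtain d where d: "d\<in>D" "\<forall>f\<in>F. le f d" by auto
  moreover from insert have "x \<in> D" by auto
  ultimately obtain c where "c\<in>D" "le x c" "le d c" using dir unfolding directed_in_def by blast
  then show ?case using d tr by blast
qed

lemma K_fin_ub:
  assumes "directed_in (Kspace::'a::metric_space set set) Kle D" "finite F" "F \<subseteq> D"
  shows "\<exists>d\<in>D. \<forall>f\<in>F. Kle f d"
proof (rule directed_fin_ub[OF assms])
  fix a b c :: "'a set" assume "Kle a b" "Kle b c" then show "Kle a c" by (simp add: Kle_def)
qed

lemma K_sup:
  assumes dir: "directed_in (Kspace::'a::metric_space set set) Kle D"
  shows "is_sup_in Kspace Kle D (\<Inter>D)"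
proof -
  have DK: "D \<subseteq> Kspace" "D \<noteq> {}" using dir by (auto simp: directed_in_def)
  then obtain d0 where d0: "d0 \<in> D" by blast
  have cd0: "compact d0" using d0 DK by (auto simp: Kspace_def)
  have tr: "\<And>a b c. Kle a b \<Longrightarrow> Kle b c \<Longrightarrow> Kle a c" by (auto simp: Kle_def)
  have "d0 \<inter> \<Inter>D \<noteq> {}"
  proof (rule compact_imp_fip[OF cd0])
    show "closed T" if "T \<in> D" for T using that DK by (auto simp: Kspace_def compact_imp_closed)
    fix F' assume "finite F'" "F' \<subseteq> D"
    have "finite (insert d0 F')" "insert d0 F' \<subseteq> D" using \<open>finite F'\<close> \<open>F' \<subseteq> D\<close> d0 by auto
    from K_fin_ub[OF dir this] obtain d where "d \<in> D" "\<forall>f\<in>insert d0 F'. Kle f d"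
      by blast
    then have "d \<subseteq> d0 \<inter> \<Inter>F'" "d \<noteq> {}" using DK by (auto simp: Kle_def Kspace_def)
    then show "d0 \<inter> \<Inter>F' \<noteq> {}" by blast
  qed
  moreover have "d0 \<inter> \<Inter>D = \<Inter>D" using d0 by blast
  ultimately have ne: "\<Inter>D \<noteq> {}" by simp
  have "compact (d0 \<inter> \<Inter>D)"
    by (rule compact_Int_closed[OF cd0], rule closed_Inter) (use DK in \<open>auto simp: Kspace_def compact_imp_closed\<close>)
  then have "compact (\<Inter>D)" using \<open>d0 \<inter> \<Inter>D = \<Inter>D\<close> by simp
  then show ?thesis using ne unfolding is_sup_in_def Kspace_def Kle_def by auto
qed

lemma K_sup_eq:
  assumes dir: "directed_in (Kspace::'a::metric_space set set) Kle D"
    and s: "is_sup_in Kspace Kle D s"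
  shows "s = \<Inter>D"
proof -
  have i: "is_sup_in Kspace Kle D (\<Inter>D)" by (rule K_sup[OF dir])
  have s1: "\<forall>d\<in>D. s \<subseteq> d" using s by (simp add: is_sup_in_def Kle_def)
  have s2: "\<forall>u\<in>Kspace. (\<forall>d\<in>D. u \<subseteq> d) \<longrightarrow> u \<subseteq> s" using s by (simp add: is_sup_in_def Kle_def)
  have i1: "\<Inter>D \<in> Kspace" using i by (simp add: is_sup_in_def)
  have "\<Inter>D \<subseteq> s" using s2 i1 by blast
  moreover have "s \<subseteq> \<Inter>D" using s1 by blast
  ultimately show ?thesis by blast
qed

lemma seq_compact:
  fixes y :: "nat \<Rightarrow> 'a::metric_space"
  assumes "y \<longlonglongrightarrow> l"
  shows "compact (insert l (range y))"
  using compactin_sequence_with_limit[of euclidean y l "range y"] assms by simp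

lemma wb_imp_interior:
  assumes wb: "way_below Kspace Kle K1 K2" and K2: "K2 \<in> Kspace" and x: "x \<in> K2"
  shows "x \<in> interior (K1::'a::metric_space set)"
proof (rule ccontr)
  assume "x \<notin> interior K1"
  then have "\<forall>n::nat. \<exists>y. y \<notin> K1 \<and> dist y x < inverse (real (Suc n))"
    unfolding mem_interior subset_iff mem_ball
    by (metis dist_commute inverse_positive_iff_positive of_nat_0_less_iff zero_less_Suc)
  then obtain y where y: "\<And>n. y n \<notin> K1" "\<And>n. dist (y n) x < inverse (real (Suc n))"
    by metis
  have lim: "y \<longlonglongrightarrow> x"
    unfolding lim_sequentially
  proof (intro allI impI)
    fix r :: real assume "r > 0"
    then obtain N where N: "inverse (real (Suc N)) < r" using reals_Archimedean by blast
    have "dist (y n) x < r" if "n \<ge> N" for n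
    proof -
      have "inverse (real (Suc n)) \<le> inverse (real (Suc N))"
        using that by (simp add: le_imp_inverse_le)
      then show ?thesis using y(2)[of n] N by linarith
    qed
    then show "\<exists>no. \<forall>n\<ge>no. dist (y n) x < r" by blast
  qed
  define d where "d n = K2 \<union> insert x (range (\<lambda>m. y (m+n)))" for n
  have cK2: "compact K2" "K2 \<noteq> {}" using K2 by (auto simp: Kspace_def)
  have comp: "compact (d n)" for n
    unfolding d_def
    by (rule compact_Un[OF cK2(1)], rule seq_compact, rule LIMSEQ_ignore_initial_segment[OF lim])
  have mono: "d k \<subseteq> d n" if "n \<le> k" for n k
  proof -
    have "y (m+k) = y ((m+k-n)+n)" for m using that by simp
    then show ?thesis unfolding d_def by blast
  qed
  have dir: "directed_in Kspace Kle (range d)"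
    unfolding directed_in_def
  proof (intro conjI ballI)
    show "range d \<subseteq> Kspace" using comp by (auto simp: Kspace_def d_def)
    show "range d \<noteq> {}" by simp
    fix a b assume "a \<in> range d" "b \<in> range d"
    then obtain i j where "a = d i" "b = d j" by blast
    then show "\<exists>c\<in>range d. Kle a c \<and> Kle b c"
      using mono[of i "max i j"] mono[of j "max i j"] by (auto simp: Kle_def)
  qed
  have sup: "is_sup_in Kspace Kle (range d) K2"
    unfolding is_sup_in_def
  proof (intro conjI ballI impI)
    show "K2 \<in> Kspace" by fact
    show "Kle u K2" if "u \<in> range d" for u using that by (auto simp: Kle_def d_def)
    fix u assume u: "u \<in> Kspace" "\<forall>v\<in>range d. Kle v u"
    show "Kle K2 u" unfolding Kle_def
    proof
      fix z assume zu: "z \<in> u"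
      show "z \<in> K2"
      proof (rule ccontr)
        assume zK: "z \<notin> K2"
        then have "z \<noteq> x" using x by auto
        then have "dist z x > 0" by simp
        then obtain n where n: "inverse (real (Suc n)) < dist z x" using reals_Archimedean by blast
        have "z \<in> d n" using u zu by (auto simp: Kle_def)
        then obtain m where m: "z = y (m+n)" using zK \<open>z \<noteq> x\<close> by (auto simp: d_def)
        have "inverse (real (Suc (m+n))) \<le> inverse (real (Suc n))"
          by (simp add: le_imp_inverse_le)
        then show False using y(2)[of "m+n"] n unfolding m by linarith
      qed
    qed
  qed
  have "Kle K2 K2" by (simp add: Kle_def)
  then obtain v where "v \<in> range d" "Kle K1 v"
    using wbE[OF wb dir sup] by blast
  then obtain n where "d n \<subseteq> K1" by (auto simp: Kle_def)
  moreover have "y n \<in> range (\<lambda>m. y (m+n))" by (rule image_eqI[of _ _ 0]) simp_all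
  then have "y n \<in> d n" by (auto simp: d_def)
  ultimately show False using y(1)[of n] by auto
qed

lemma interior_imp_wb:
  assumes K1: "K1 \<in> Kspace" and sub: "K2 \<subseteq> interior (K1::'a::metric_space set)"
  shows "way_below Kspace Kle K1 K2"
  unfolding way_below_def
proof (intro allI impI)
  fix D s assume a: "directed_in Kspace Kle D \<and> is_sup_in Kspace Kle D s \<and> Kle K2 s"
  then have dir: "directed_in Kspace Kle D" and s: "is_sup_in Kspace Kle D s" and "s \<subseteq> K2"
    by (auto simp: Kle_def)
  have "s = \<Inter>D" by (rule K_sup_eq[OF dir s])
  then have IS: "\<Inter>D \<subseteq> interior K1" using \<open>s \<subseteq> K2\<close> sub by blast
  have DK: "D \<subseteq> Kspace" "D \<noteq> {}" using dir by (auto simp: directed_in_def)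
  then obtain d0 where d0: "d0 \<in> D" by blast
  have cd0: "compact d0" using d0 DK by (auto simp: Kspace_def)
  have tr: "\<And>a b c. Kle a b \<Longrightarrow> Kle b c \<Longrightarrow> Kle a c" by (auto simp: Kle_def)
  show "\<exists>d\<in>D. Kle K1 d"
  proof (rule ccontr)
    assume nd: "\<not> (\<exists>d\<in>D. Kle K1 d)"
    have "d0 \<inter> \<Inter>((\<lambda>d. d - interior K1) ` D) \<noteq> {}"
    proof (rule compact_imp_fip[OF cd0])
      show "closed T" if T: "T \<in> (\<lambda>d. d - interior K1) ` D" for T
      proof -
        obtain d where "d \<in> D" "T = d - interior K1" using T by blast
        moreover have "closed d" using \<open>d \<in> D\<close> DK by (auto simp: Kspace_def intro: compact_imp_closed)
        ultimately show ?thesis by (simp add: closed_Diff)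
      qed
      fix F' assume F': "finite F'" "F' \<subseteq> (\<lambda>d. d - interior K1) ` D"
      then obtain G where G: "G \<subseteq> D" "finite G" "F' = (\<lambda>d. d - interior K1) ` G"
        by (meson finite_subset_image)
      have "finite (insert d0 G)" "insert d0 G \<subseteq> D" using G d0 by auto
      from K_fin_ub[OF dir this] obtain d where d: "d \<in> D" "\<forall>f\<in>insert d0 G. Kle f d"
        by blast
      have "\<not> d \<subseteq> interior K1" using nd d(1) interior_subset by (auto simp: Kle_def)
      then obtain z where "z \<in> d" "z \<notin> interior K1" by blast
      then have "z \<in> d0 \<inter> \<Inter>F'" using d G by (auto simp: Kle_def)
      then show "d0 \<inter> \<Inter>F' \<noteq> {}" by blast
    qed
    then obtain z where z: "z \<in> d0 \<inter> \<Inter>((\<lambda>d. d - interior K1) ` D)" by (meson ex_in_conv)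
    then have zI: "z \<in> \<Inter>((\<lambda>d. d - interior K1) ` D)" by (rule IntD2)
    have zz: "z \<in> d - interior K1" if "d \<in> D" for d
      using zI imageI[OF that, of "\<lambda>d. d - interior K1"] by (rule InterD)
    have zD: "z \<in> \<Inter>D"
    proof (rule InterI)
      fix d assume "d \<in> D" show "z \<in> d" using zz[OF \<open>d \<in> D\<close>] by (rule DiffD1)
    qed
    have "z \<notin> interior K1" using zz[OF d0] by simp
    moreover have "z \<in> interior K1" using IS zD by (rule subsetD)
    ultimately show False by contradiction
  qed
qed

lemma Q_all: "property_Q (X::'a::metric_space itself)"
  unfolding property_Q_def
  using wb_imp_interior interior_imp_wb by blast

lemma lc_compact_nbhd:
  assumes lc: "\<forall>x::'a::metric_space. \<exists>U K. open U \<and> compact K \<and> x\<in>U \<and> U\<subseteq>K"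
    and S: "compact (S::'a set)"
  shows "\<exists>L. compact L \<and> S \<subseteq> interior L"
proof -
  have "\<forall>x::'a. \<exists>p. open (fst p) \<and> compact (snd p) \<and> x \<in> fst p \<and> fst p \<subseteq> snd p"
  proof
    fix x :: 'a
    from lc obtain U K where "open U \<and> compact K \<and> x \<in> U \<and> U \<subseteq> K" by blast
    then show "\<exists>p. open (fst p) \<and> compact (snd p) \<and> x \<in> fst p \<and> fst p \<subseteq> snd p"
      by (intro exI[of _ "(U,K)"]) simp
  qed
  then have "\<exists>f. \<forall>x::'a. open (fst (f x)) \<and> compact (snd (f x)) \<and> x \<in> fst (f x) \<and> fst (f x) \<subseteq> snd (f x)"
    by (rule choice)
  then obtain f where f: "\<forall>x::'a. open (fst (f x)) \<and> compact (snd (f x)) \<and> x \<in> fst (f x) \<and> fst (f x) \<subseteq> snd (f x)"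
    by (elim exE)
  define U where "U x = fst (f x)" for x
  define K where "K x = snd (f x)" for x
  have UK: "\<And>x. open (U x) \<and> compact (K x) \<and> x \<in> U x \<and> U x \<subseteq> K x"
    using f by (simp add: U_def K_def)
  obtain C' where C': "C' \<subseteq> S" "finite C'" "S \<subseteq> (\<Union>c\<in>C'. U c)"
  proof (rule compactE_image[OF S, of S U])
    show "open (U T)" for T using UK by blast
    show "S \<subseteq> (\<Union>c\<in>S. U c)" using UK by blast
  qed
  have "compact (\<Union>c\<in>C'. K c)" using C'(2) UK by (intro compact_UN) auto
  moreover have "(\<Union>c\<in>C'. U c) \<subseteq> interior (\<Union>c\<in>C'. K c)"
    by (rule interior_maximal) (use UK in blast, use UK in auto)
  ultimately show ?thesis using C'(3) by blast
qed

lemma lc_iff: "locally_compact_space (euclidean :: 'a::metric_space topology) \<longleftrightarrow>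
   (\<forall>x::'a. \<exists>U K. open U \<and> compact K \<and> x \<in> U \<and> U \<subseteq> K)"
  by (simp add: locally_compact_space_def)

lemma W_eq:
  assumes "K \<in> Kspace"
  shows "{y\<in>(Kspace::'a::metric_space set set). way_below Kspace Kle y K} = {L\<in>Kspace. K \<subseteq> interior L}"
  using wb_imp_interior[OF _ assms] interior_imp_wb by blast

lemma lc_W:
  assumes lc: "\<forall>x::'a::metric_space. \<exists>U K. open U \<and> compact K \<and> x\<in>U \<and> U\<subseteq>K"
    and K: "K \<in> (Kspace :: 'a set set)"
  shows "directed_in Kspace Kle {L\<in>Kspace. K \<subseteq> interior L} \<and> is_sup_in Kspace Kle {L\<in>Kspace. K \<subseteq> interior L} K"
proof -
  have cK: "compact K" "K \<noteq> {}" using K by (auto simp: Kspace_def)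
  obtain L0 where L0: "compact L0" "K \<subseteq> interior L0" using lc_compact_nbhd[OF lc cK(1)] by blast
  have L0K: "L0 \<in> Kspace" using L0 cK interior_subset by (fastforce simp: Kspace_def)
  have dir: "directed_in Kspace Kle {L\<in>Kspace. K \<subseteq> interior L}"
    unfolding directed_in_def
  proof (intro conjI ballI)
    show "{L\<in>Kspace. K \<subseteq> interior L} \<subseteq> Kspace" by blast
    show "{L\<in>Kspace. K \<subseteq> interior L} \<noteq> {}" using L0K L0 by blast
    fix a b assume a: "a \<in> {L\<in>Kspace. K \<subseteq> interior L}" and b: "b \<in> {L\<in>Kspace. K \<subseteq> interior L}"
    have "K \<subseteq> a \<inter> b" using a b interior_subset by blast
    then have "a \<inter> b \<in> Kspace"
      using a b cK
      by (auto simp: Kspace_def compact_Int_closed compact_imp_closed)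
    moreover have "K \<subseteq> interior (a \<inter> b)" using a b by simp
    ultimately show "\<exists>c\<in>{L\<in>Kspace. K \<subseteq> interior L}. Kle a c \<and> Kle b c"
      by (intro bexI[of _ "a \<inter> b"]) (auto simp: Kle_def)
  qed
  have sup: "is_sup_in Kspace Kle {L\<in>Kspace. K \<subseteq> interior L} K"
    unfolding is_sup_in_def
  proof (intro conjI ballI impI)
    show "K \<in> Kspace" by fact
    show "Kle d K" if "d \<in> {L\<in>Kspace. K \<subseteq> interior L}" for d
      using that interior_subset by (auto simp: Kle_def)
    fix u assume u: "u \<in> Kspace" "\<forall>d\<in>{L\<in>Kspace. K \<subseteq> interior L}. Kle d u"
    show "Kle K u" unfolding Kle_def
    proof
      fix y assume yu: "y \<in> u"
      show "y \<in> K"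
      proof (rule ccontr)
        assume yK: "y \<notin> K"
        have "open (- K)" using cK compact_imp_closed by blast
        then obtain e where e: "e > 0" "ball y e \<subseteq> - K" using yK open_contains_ball by blast
        define L where "L = L0 \<inter> - ball y (e/2)"
        have "compact L" unfolding L_def using L0 by (auto intro: compact_Int_closed)
        have "K \<subseteq> - cball y (e/2)" using e by (auto simp: subset_iff)
        moreover have "open (- cball y (e/2))" by auto
        ultimately have "K \<subseteq> interior (- ball y (e/2))"
          by (meson ball_subset_cball compl_mono interior_maximal subset_trans)
        then have "K \<subseteq> interior L" unfolding L_def using L0 by simp
        then have "L \<in> {L\<in>Kspace. K \<subseteq> interior L}"
          using \<open>compact L\<close> cK interior_subset by (fastforce simp: Kspace_def)
        then have "u \<subseteq> L" using u by (auto simp: Kle_def)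
        moreover have "y \<notin> L" using e by (simp add: L_def)
        ultimately show False using yu by blast
      qed
    qed
  qed
  show ?thesis using dir sup by blast
qed

lemma lc_imp_cs:
  assumes lc: "\<forall>x::'a::metric_space. \<exists>U K. open U \<and> compact K \<and> x\<in>U \<and> U\<subseteq>K"
  shows "continuous_poset (Kspace :: 'a set set) Kle"
  unfolding continuous_poset_def
proof (intro conjI ballI)
  show "directed_complete (Kspace :: 'a set set) Kle"
    unfolding directed_complete_def using K_sup by blast
  fix x :: "'a set" assume x: "x \<in> Kspace"
  show "directed_in Kspace Kle {y \<in> Kspace. way_below Kspace Kle y x}"
    using lc_W[OF lc x] W_eq[OF x] by simp
  show "is_sup_in Kspace Kle {y \<in> Kspace. way_below Kspace Kle y x} x"
    using lc_W[OF lc x] W_eq[OF x] by simp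
qed

lemma cs_imp_lc:
  assumes cs: "continuous_poset (Kspace :: 'a::metric_space set set) Kle"
  shows "\<forall>x::'a. \<exists>U K. open U \<and> compact K \<and> x\<in>U \<and> U\<subseteq>K"
proof
  fix x :: 'a
  have xK: "{x} \<in> Kspace" by (simp add: Kspace_def)
  then have "directed_in Kspace Kle {y \<in> Kspace. way_below Kspace Kle y {x}}"
    using cs unfolding continuous_poset_def by blast
  then obtain L where L: "L \<in> Kspace" "way_below Kspace Kle L {x}"
    unfolding directed_in_def by blast
  then have "x \<in> interior L" using wb_imp_interior[OF L(2) xK] by simp
  then show "\<exists>U K. open U \<and> compact K \<and> x\<in>U \<and> U\<subseteq>K"
    using L(1) interior_subset
    by (intro exI[of _ "interior L"] exI[of _ L]) (auto simp: Kspace_def)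
qed

lemma lc_imp_xi:
  assumes lc: "\<forall>x::'a::metric_space. \<exists>U K. open U \<and> compact K \<and> x\<in>U \<and> U\<subseteq>K"
  shows "xi_sigma_continuous (X::'a itself)"
  unfolding xi_sigma_continuous_def
proof (intro allI impI)
  fix U :: "'a set set" assume so: "scott_open Kspace Kle U"
  have key: "\<exists>T. open T \<and> x \<in> T \<and> T \<subseteq> {y. {y} \<in> U}" if xU: "{x} \<in> U" for x :: 'a
  proof -
    have xK: "{x} \<in> Kspace" by (simp add: Kspace_def)
    have sc: "\<forall>D s. directed_in Kspace Kle D \<and> is_sup_in Kspace Kle D s \<and> s \<in> U \<longrightarrow> D \<inter> U \<noteq> {}"
      using so by (simp add: scott_open_def)
    have "{L\<in>Kspace. {x} \<subseteq> interior L} \<inter> U \<noteq> {}"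
      using sc[rule_format, of "{L\<in>Kspace. {x} \<subseteq> interior L}" "{x}"] lc_W[OF lc xK] xU by simp
    then obtain L where L: "L \<in> Kspace" "{x} \<subseteq> interior L" "L \<in> U" by blast
    have up: "\<forall>u\<in>U. \<forall>v\<in>Kspace. Kle u v \<longrightarrow> v \<in> U" using so by (simp add: scott_open_def)
    have "interior L \<subseteq> {y. {y} \<in> U}"
    proof
      fix z assume "z \<in> interior L"
      then have "z \<in> L" using interior_subset by blast
      then have "Kle L {z}" by (simp add: Kle_def)
      moreover have "{z} \<in> Kspace" by (simp add: Kspace_def)
      ultimately show "z \<in> {y. {y} \<in> U}" using up L(3) by blast
    qed
    then show "\<exists>T. open T \<and> x \<in> T \<and> T \<subseteq> {y. {y} \<in> U}" using L(2) by blast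
  qed
  show "open {x. {x} \<in> U}"
    by (rule open_subopen[THEN iffD2]) (use key in simp)
qed

lemma O_sup: "A \<subseteq> {U::'a::topological_space set. open U} \<Longrightarrow> is_sup_in {U. open U} (\<subseteq>) A (\<Union>A)"
  unfolding is_sup_in_def by auto

lemma O_sup_eq: "A \<subseteq> {U::'a::topological_space set. open U} \<Longrightarrow> is_sup_in {U. open U} (\<subseteq>) A s \<Longrightarrow> s = \<Union>A"
  unfolding is_sup_in_def by (metis (no_types, lifting) Sup_least Sup_upper mem_Collect_eq open_Union subset_antisym subset_iff)

lemma lc_imp_cc:
  assumes lc: "\<forall>x::'a::metric_space. \<exists>U K. open U \<and> compact K \<and> x\<in>U \<and> U\<subseteq>K"
  shows "core_compact (X::'a itself)"
  unfolding core_compact_def continuous_lattice_def continuous_poset_def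
proof (intro conjI allI impI ballI)
  let ?O = "{U::'a set. open U}"
  show "\<exists>s. is_sup_in ?O (\<subseteq>) A s" if "A \<subseteq> ?O" for A using O_sup[OF that] by blast
  show "directed_complete ?O (\<subseteq>)"
    unfolding directed_complete_def
  proof (intro allI impI)
    fix D assume "directed_in ?O (\<subseteq>) D"
    then have "D \<subseteq> ?O" by (simp add: directed_in_def)
    then show "\<exists>s. is_sup_in ?O (\<subseteq>) D s" using O_sup by blast
  qed
  fix V assume V: "V \<in> ?O"
  have wbsub: "U \<subseteq> V" if "way_below ?O (\<subseteq>) U V" for U
  proof -
    have dV: "directed_in ?O (\<subseteq>) {V}" using V by (auto simp: directed_in_def)
    have sV: "is_sup_in ?O (\<subseteq>) {V} V" using V by (auto simp: is_sup_in_def)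
    from wbE[OF that dV sV] show ?thesis by simp
  qed
  let ?W = "{y \<in> ?O. way_below ?O (\<subseteq>) y V}"
  show "directed_in ?O (\<subseteq>) ?W"
    unfolding directed_in_def
  proof (intro conjI ballI)
    show "?W \<subseteq> ?O" by blast
    have "way_below ?O (\<subseteq>) {} V" unfolding way_below_def directed_in_def by force
    then show "?W \<noteq> {}" by blast
    fix a b assume a: "a \<in> ?W" and b: "b \<in> ?W"
    have "way_below ?O (\<subseteq>) (a \<union> b) V"
      unfolding way_below_def
    proof (intro allI impI)
      fix D s assume h: "directed_in ?O (\<subseteq>) D \<and> is_sup_in ?O (\<subseteq>) D s \<and> V \<subseteq> s"
      have h1: "directed_in ?O (\<subseteq>) D" "is_sup_in ?O (\<subseteq>) D s" "V \<subseteq> s" using h by auto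
      have wa: "way_below ?O (\<subseteq>) a V" and wb: "way_below ?O (\<subseteq>) b V" using a b by auto
      from wbE[OF wa h1] obtain d1 where d1: "d1 \<in> D" "a \<subseteq> d1" ..
      from wbE[OF wb h1] obtain d2 where d2: "d2 \<in> D" "b \<subseteq> d2" ..
      from dirE[OF h1(1) d1(1) d2(1)] obtain c where c: "c \<in> D" "d1 \<subseteq> c \<and> d2 \<subseteq> c" ..
      have "a \<union> b \<subseteq> c" using c(2) d1(2) d2(2) by blast
      with c(1) show "\<exists>d\<in>D. a \<union> b \<subseteq> d" ..
    qed
    then have "a \<union> b \<in> ?W" using a b by auto
    then show "\<exists>c\<in>?W. a \<subseteq> c \<and> b \<subseteq> c" by blast
  qed
  show "is_sup_in ?O (\<subseteq>) ?W V"
    unfolding is_sup_in_def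
  proof (intro conjI ballI impI)
    show "V \<in> ?O" by fact
    show "d \<subseteq> V" if "d \<in> ?W" for d using that wbsub by blast
    fix u assume u: "u \<in> ?O" "\<forall>d\<in>?W. d \<subseteq> u"
    show "V \<subseteq> u"
    proof
      fix x assume xV: "x \<in> V"
      obtain U0 K0 where UK: "open U0" "compact K0" "x \<in> U0" "U0 \<subseteq> K0" using lc by blast
      obtain e where e: "e > 0" "cball x e \<subseteq> V" using V xV open_contains_cball by blast
      define U' where "U' = U0 \<inter> ball x e"
      define K' where "K' = K0 \<inter> cball x e"
      have cK': "compact K'" unfolding K'_def using UK by (auto intro: compact_Int_closed)
      have "U' \<subseteq> K'" unfolding U'_def K'_def using UK(4) ball_subset_cball[of x e] by blast
      have "K' \<subseteq> V" unfolding K'_def using e(2) by blast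
      have "x \<in> U'" unfolding U'_def using UK(3) e(1) by simp
      have "open U'" unfolding U'_def using UK(1) by (intro open_Int) auto
      have "way_below ?O (\<subseteq>) U' V"
        unfolding way_below_def
      proof (intro allI impI)
        fix D s assume h: "directed_in ?O (\<subseteq>) D \<and> is_sup_in ?O (\<subseteq>) D s \<and> V \<subseteq> s"
        then have DO: "D \<subseteq> ?O" by (auto simp: directed_in_def)
        have sD: "is_sup_in ?O (\<subseteq>) D s" and Vs: "V \<subseteq> s" using h by simp_all
        have "s = \<Union>D" using O_sup_eq[OF DO sD] .
        then have KD: "K' \<subseteq> \<Union>D" using Vs \<open>K' \<subseteq> V\<close> by simp
        have opD: "\<And>B. B \<in> D \<Longrightarrow> open B" using DO by blast
        obtain T where T: "T \<subseteq> D" "finite T" "K' \<subseteq> \<Union>T"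
          by (rule compactE[OF cK' KD opD])
        have dD: "directed_in ?O (\<subseteq>) D" using h by simp
        from directed_fin_ub[OF dD T(2) T(1) subset_trans] obtain d where d: "d \<in> D" "\<forall>f\<in>T. f \<subseteq> d" ..
        have "\<Union>T \<subseteq> d"
        proof (rule Union_least)
          fix f assume "f \<in> T" with d(2) show "f \<subseteq> d" ..
        qed
        then have "U' \<subseteq> d" using T(3) \<open>U' \<subseteq> K'\<close> by (meson subset_trans)
        with d(1) show "\<exists>d\<in>D. U' \<subseteq> d" ..
      qed
      then have "U' \<in> ?W" using \<open>open U'\<close> by blast
      then show "x \<in> u" using u \<open>x \<in> U'\<close> by blast
    qed
  qed
qed

lemma cc_imp_lc:
  assumes cc: "core_compact (X::'a::metric_space itself)"
  shows "\<forall>x::'a. \<exists>U K. open U \<and> compact K \<and> x\<in>U \<and> U\<subseteq>K"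
proof
  fix x :: 'a
  let ?O = "{U::'a set. open U}"
  let ?W = "{y \<in> ?O. way_below ?O (\<subseteq>) y UNIV}"
  have cp: "continuous_poset ?O (\<subseteq>)" using cc
    unfolding core_compact_def continuous_lattice_def by simp
  have "is_sup_in ?O (\<subseteq>) ?W UNIV" using cp unfolding continuous_poset_def
    by (simp del: Collect_mem_eq)
  moreover have "?W \<subseteq> ?O" by blast
  ultimately have "UNIV = \<Union>?W" using O_sup_eq[of ?W UNIV] by simp
  then have "x \<in> \<Union>?W" by (metis UNIV_I)
  then obtain U where "U \<in> ?W" "x \<in> U" by (rule UnionE)
  then have U: "open U" "way_below ?O (\<subseteq>) U UNIV" "x \<in> U" by auto
  obtain e where e: "e > 0" "cball x e \<subseteq> U" using U open_contains_cball by blast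
  define C where "C = cball x e"
  have clC: "closed C" unfolding C_def by simp
  have CU: "C \<subseteq> U" unfolding C_def using e(2) .
  have "compact C"
    unfolding compact_eq_Heine_Borel
  proof (intro allI impI)
    fix \<C> assume h: "(\<forall>c\<in>\<C>. open c) \<and> C \<subseteq> \<Union>\<C>"
    define D where "D = (\<lambda>F. \<Union>F \<union> - C) ` {F. F \<subseteq> \<C> \<and> finite F}"
    have mem: "\<Union>F \<union> - C \<in> D" if "F \<subseteq> \<C>" "finite F" for F
      unfolding D_def using that by blast
    have dir: "directed_in ?O (\<subseteq>) D"
      unfolding directed_in_def
    proof (intro conjI ballI)
      show "D \<subseteq> ?O"
      proof
        fix d assume "d \<in> D"
        then obtain F where "F \<subseteq> \<C>" "d = \<Union>F \<union> - C" unfolding D_def by blast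
        moreover have "open (\<Union>F)" using h \<open>F \<subseteq> \<C>\<close> by (intro open_Union) blast
        ultimately show "d \<in> ?O" using clC by auto
      qed
      have "\<Union>{} \<union> - C \<in> D" by (rule mem) auto
      then show "D \<noteq> {}" by blast
      fix a b assume "a \<in> D" "b \<in> D"
      then obtain F1 F2 where FF: "F1 \<subseteq> \<C>" "finite F1" "a = \<Union>F1 \<union> - C"
        "F2 \<subseteq> \<C>" "finite F2" "b = \<Union>F2 \<union> - C" unfolding D_def by blast
      have "\<Union>(F1 \<union> F2) \<union> - C \<in> D" by (rule mem) (use FF in auto)
      moreover have "a \<subseteq> \<Union>(F1 \<union> F2) \<union> - C" "b \<subseteq> \<Union>(F1 \<union> F2) \<union> - C"
        using FF by auto
      ultimately
      show "\<exists>c\<in>D. a \<subseteq> c \<and> b \<subseteq> c" by blast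
    qed
    have sup: "is_sup_in ?O (\<subseteq>) D UNIV"
      unfolding is_sup_in_def
    proof (intro conjI ballI impI)
      show "UNIV \<in> ?O" by simp
      show "d \<subseteq> UNIV" for d by simp
      fix u assume u: "\<forall>d\<in>D. d \<subseteq> u"
      show "UNIV \<subseteq> u"
      proof
        fix z :: 'a
        show "z \<in> u"
        proof (cases "z \<in> C")
          case True
          then obtain c where "c \<in> \<C>" "z \<in> c" using h by blast
          have m: "\<Union>{c} \<union> - C \<in> D" by (rule mem) (use \<open>c \<in> \<C>\<close> in auto)
          have "\<Union>{c} \<union> - C \<subseteq> u" using u m by (rule bspec)
          moreover have "z \<in> \<Union>{c} \<union> - C" using \<open>z \<in> c\<close> by simp
          ultimately show ?thesis by (rule subsetD)
        next
          case False
          have m: "\<Union>{} \<union> - C \<in> D" by (rule mem) auto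
          have "\<Union>{} \<union> - C \<subseteq> u" using u m by (rule bspec)
          moreover have "z \<in> \<Union>{} \<union> - C" using False by simp
          ultimately show ?thesis by (rule subsetD)
        qed
      qed
    qed
    obtain d where "d \<in> D" "U \<subseteq> d" using wbE[OF U(2) dir sup] by blast
    from \<open>d \<in> D\<close> obtain F where F: "F \<subseteq> \<C>" "finite F" "d = \<Union>F \<union> - C" unfolding D_def by blast
    then have "U \<subseteq> \<Union>F \<union> - C" using \<open>U \<subseteq> d\<close> by simp
    then have "C \<subseteq> \<Union>F" using CU by blast
    then show "\<exists>D\<subseteq>\<C>. finite D \<and> C \<subseteq> \<Union>D" using F by blast
  qed
  then show "\<exists>U K. open U \<and> compact K \<and> x\<in>U \<and> U\<subseteq>K"
    unfolding C_def using e(1) ball_subset_cball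
    by (intro exI[of _ "ball x e"] exI[of _ "cball x e"]) auto
qed

theorem mainTheorem15:
  fixes X :: "'a::metric_space itself"
  shows "(locally_compact_space (euclidean :: 'a topology) \<longleftrightarrow>
            K_continuous_semilattice X \<and> xi_sigma_continuous X)
       \<and> (locally_compact_space (euclidean :: 'a topology) \<longleftrightarrow>
            K_continuous_semilattice X \<and> property_Q X)
       \<and> (locally_compact_space (euclidean :: 'a topology) \<longleftrightarrow> K_continuous_semilattice X)
       \<and> (locally_compact_space (euclidean :: 'a topology) \<longleftrightarrow> core_compact X)"
proof -
  let ?LC = "locally_compact_space (euclidean :: 'a topology)"
  have cs: "?LC \<longleftrightarrow> K_continuous_semilattice X"
  proof
    assume ?LC
    then have "\<forall>x::'a. \<exists>U K. open U \<and> compact K \<and> x\<in>U \<and> U\<subseteq>K" unfolding lc_iff[symmetric] .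
    then show "K_continuous_semilattice X" unfolding K_continuous_semilattice_def by (rule lc_imp_cs)
  next
    assume "K_continuous_semilattice X"
    then have "continuous_poset (Kspace :: 'a set set) Kle" unfolding K_continuous_semilattice_def .
    then have "\<forall>x::'a. \<exists>U K. open U \<and> compact K \<and> x\<in>U \<and> U\<subseteq>K" by (rule cs_imp_lc)
    then show ?LC unfolding lc_iff .
  qed
  have xi: "?LC \<Longrightarrow> xi_sigma_continuous X"
  proof -
    assume ?LC
    then have "\<forall>x::'a. \<exists>U K. open U \<and> compact K \<and> x\<in>U \<and> U\<subseteq>K" unfolding lc_iff[symmetric] .
    then show "xi_sigma_continuous X" by (rule lc_imp_xi)
  qed
  have cc: "?LC \<longleftrightarrow> core_compact X"
  proof
    assume ?LC
    then have "\<forall>x::'a. \<exists>U K. open U \<and> compact K \<and> x\<in>U \<and> U\<subseteq>K" unfolding lc_iff[symmetric] .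
    then show "core_compact X" by (rule lc_imp_cc)
  next
    assume "core_compact X"
    then have "\<forall>x::'a. \<exists>U K. open U \<and> compact K \<and> x\<in>U \<and> U\<subseteq>K" by (rule cc_imp_lc)
    then show ?LC unfolding lc_iff .
  qed
  have q: "property_Q X" by (rule Q_all)
  show ?thesis
  proof (intro conjI)
    show "?LC \<longleftrightarrow> K_continuous_semilattice X \<and> xi_sigma_continuous X" using cs xi by blast
    show "?LC \<longleftrightarrow> K_continuous_semilattice X \<and> property_Q X" using cs q by blast
    show "?LC \<longleftrightarrow> K_continuous_semilattice X" by (rule cs)
    show "?LC \<longleftrightarrow> core_compact X" by (rule cc)
  qed
qed

end
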